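(* Let $G$ be an $n\times n$ bimatrix game with payoff matrices $R,C\in[0,1]^{n\times n}$ that has a Nash equilibrium which is not a pair of pure strategies. (a) If $G$ satisfies the strong well-supported $(\epsilon,\Delta)$-approximation stability condition, then $\Delta\ge\epsilon/4$. (b) If $G$ satisfies the strong $(\epsilon,\Delta)$-stability to perturbations condition, then $\Delta\ge\epsilon/8$.
   Context: Mixed strategies are probability vectors; payoffs $p^TRq$, $p^TCq$; $e_i$ the $i$-th unit vector; $\mathrm{supp}(p)=\{i:p_i>0\}$. Nash equilibrium: $e_i^TRq\le p^TRq$ and $p^TCe_j\le p^TCq$ for all $i,j$. Well-supported $\epsilon$-equilibrium: for every $i\in\mathrm{supp}(p)$ and all $j$, $e_i^TRq\ge e_j^TRq-\epsilon$, and for every $i\in\mathrm{supp}(q)$ and all $j$, $p^TCe_i\ge p^TCe_j-\epsilon$. Distance $d(p,p')=\frac12\sum_i|p_i-p'_i|$, $d((p,q),(p',q'))=\max(d(p,p'),d(q,q'))$; $\Delta$-close means distance $\le\Delta$. $G'$ (matrices $R',C'$) is an $L_\infty$ $\epsilon$-perturbation of $G$ if $|R_{i,j}-R'_{i,j}|\le\epsilon$ and $|C_{i,j}-C'_{i,j}|\le\epsilon$ for all $i,j$ (entries need not lie in $[0,1]$). Strong well-supported $(\epsilon,\Delta)$-approximation stability: there is a Nash equilibrium $(p^*,q^* )$ of $G$ such that every well-supported $\epsilon$-equilibrium of $G$ is $\Delta$-close to $(p^*,q^* )$. Strong $(\epsilon,\Delta)$-stability to perturbations: there is a Nash equilibrium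 $(p^*,q^* )$ of $G$ such that for every $L_\infty$ $\epsilon$-perturbation $G'$ of $G$, every Nash equilibrium of $G'$ is $\Delta$-close to $(p^*,q^* )$. *)

theory Defs
  imports Complex_Main
begin

text \<open>Strategies of an n x n bimatrix game are real vectors indexed by a finite
  type 'n (so n = CARD('n)); matrices are functions 'n \<Rightarrow> 'n \<Rightarrow> real.\<close>

definition prob_vec :: "('n::finite \<Rightarrow> real) \<Rightarrow> bool" where
  "prob_vec p \<longleftrightarrow> (\<forall>i. 0 \<le> p i) \<and> (\<Sum>i\<in>UNIV. p i) = 1"

definition bil :: "('n::finite \<Rightarrow> real) \<Rightarrow> ('n \<Rightarrow> 'n \<Rightarrow> real) \<Rightarrow> ('n \<Rightarrow> real) \<Rightarrow> real" where
  "bil p M q = (\<Sum>i\<in>UNIV. \<Sum>j\<in>UNIV. p i * M i j * q j)"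

definition unitv :: "'n \<Rightarrow> ('n \<Rightarrow> real)" where
  "unitv i = (\<lambda>k. if k = i then 1 else 0)"

definition supp :: "('n \<Rightarrow> real) \<Rightarrow> 'n set" where
  "supp p = {i. p i > 0}"

definition entries01 :: "('n \<Rightarrow> 'n \<Rightarrow> real) \<Rightarrow> bool" where
  "entries01 M \<longleftrightarrow> (\<forall>i j. 0 \<le> M i j \<and> M i j \<le> 1)"

definition nash :: "('n::finite \<Rightarrow> 'n \<Rightarrow> real) \<Rightarrow> ('n \<Rightarrow> 'n \<Rightarrow> real) \<Rightarrow> ('n \<Rightarrow> real) \<Rightarrow> ('n \<Rightarrow> real) \<Rightarrow> bool" where
  "nash R C p q \<longleftrightarrow> prob_vec p \<and> prob_vec q \<and>
     (\<forall>i. bil (unitv i) R q \<le> bil p R q) \<and> (\<forall>j. bil p C (unitv j) \<le> bil p C q)"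

definition ws_eq :: "real \<Rightarrow> ('n::finite \<Rightarrow> 'n \<Rightarrow> real) \<Rightarrow> ('n \<Rightarrow> 'n \<Rightarrow> real) \<Rightarrow> ('n \<Rightarrow> real) \<Rightarrow> ('n \<Rightarrow> real) \<Rightarrow> bool" where
  "ws_eq \<epsilon> R C p q \<longleftrightarrow> prob_vec p \<and> prob_vec q \<and>
     (\<forall>i\<in>supp p. \<forall>j. bil (unitv i) R q \<ge> bil (unitv j) R q - \<epsilon>) \<and>
     (\<forall>i\<in>supp q. \<forall>j. bil p C (unitv i) \<ge> bil p C (unitv j) - \<epsilon>)"

definition dist_strat :: "('n::finite \<Rightarrow> real) \<Rightarrow> ('n \<Rightarrow> real) \<Rightarrow> real" where
  "dist_strat p p' = (1/2) * (\<Sum>i\<in>UNIV. \<bar>p i - p' i\<bar>)"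

definition dist_prof :: "('n::finite \<Rightarrow> real) \<Rightarrow> ('n \<Rightarrow> real) \<Rightarrow> ('n \<Rightarrow> real) \<Rightarrow> ('n \<Rightarrow> real) \<Rightarrow> real" where
  "dist_prof p q p' q' = max (dist_strat p p') (dist_strat q q')"

definition pure_pair :: "('n \<Rightarrow> real) \<Rightarrow> ('n \<Rightarrow> real) \<Rightarrow> bool" where
  "pure_pair p q \<longleftrightarrow> (\<exists>i j. p = unitv i \<and> q = unitv j)"

definition perturbation :: "real \<Rightarrow> ('n \<Rightarrow> 'n \<Rightarrow> real) \<Rightarrow> ('n \<Rightarrow> 'n \<Rightarrow> real) \<Rightarrow> ('n \<Rightarrow> 'n \<Rightarrow> real) \<Rightarrow> ('n \<Rightarrow> 'n \<Rightarrow> real) \<Rightarrow> bool" where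
  "perturbation \<epsilon> R C R' C' \<longleftrightarrow> (\<forall>i j. \<bar>R i j - R' i j\<bar> \<le> \<epsilon> \<and> \<bar>C i j - C' i j\<bar> \<le> \<epsilon>)"

definition strong_ws_approx_stable :: "real \<Rightarrow> real \<Rightarrow> ('n::finite \<Rightarrow> 'n \<Rightarrow> real) \<Rightarrow> ('n \<Rightarrow> 'n \<Rightarrow> real) \<Rightarrow> bool" where
  "strong_ws_approx_stable \<epsilon> \<Delta> R C \<longleftrightarrow>
     (\<exists>ps qs. nash R C ps qs \<and>
        (\<forall>p q. ws_eq \<epsilon> R C p q \<longrightarrow> dist_prof p q ps qs \<le> \<Delta>))"

definition strong_pert_stable :: "real \<Rightarrow> real \<Rightarrow> ('n::finite \<Rightarrow> 'n \<Rightarrow> real) \<Rightarrow> ('n \<Rightarrow> 'n \<Rightarrow> real) \<Rightarrow> bool" where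
  "strong_pert_stable \<epsilon> \<Delta> R C \<longleftrightarrow>
     (\<exists>ps qs. nash R C ps qs \<and>
        (\<forall>R' C' p q. perturbation \<epsilon> R C R' C' \<longrightarrow> nash R' C' p q \<longrightarrow> dist_prof p q ps qs \<le> \<Delta>))"

end

theory Submission
  imports Defs
begin

definition tr :: "('n \<Rightarrow> 'n \<Rightarrow> real) \<Rightarrow> ('n \<Rightarrow> 'n \<Rightarrow> real)" where
  "tr M = (\<lambda>i j. M j i)"

lemma tr_tr[simp]: "tr (tr M) = M" by (simp add: tr_def)

lemma bil_tr[simp]: "bil q (tr M) p = bil p M q"
  unfolding bil_def tr_def
  by (subst sum.swap) (simp add: ac_simps)

lemma unit_l: "unitv i k * x = (if k = i then x else 0)" by (simp add: unitv_def)
lemma unit_r: "x * unitv i k = (if k = i then x else 0)" by (simp add: unitv_def)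

lemma if_mult0: "(if P then a else 0) * (b::real) = (if P then a*b else 0)" by simp

lemma bil_unit_left: "bil (unitv i) M q = (\<Sum>j\<in>UNIV. M i j * q j)"
  unfolding bil_def
  apply (simp add: unit_l mult.assoc cong: if_cong)
  apply (subst sum.swap)
  apply (simp add: if_mult0)
  done

lemma bil_unit_right: "bil p M (unitv j) = (\<Sum>i\<in>UNIV. p i * M i j)"
  unfolding bil_def by (simp add: unit_r cong: if_cong)

lemma bil_cols: "bil p M q = (\<Sum>j\<in>UNIV. bil p M (unitv j) * q j)"
  unfolding bil_unit_right bil_def[of p M q]
  by (subst sum.swap) (simp add: sum_distrib_right)

lemma bil_rows: "bil p M q = (\<Sum>i\<in>UNIV. p i * bil (unitv i) M q)"
  unfolding bil_unit_left bil_def[of p M q]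
  by (simp add: sum_distrib_left ac_simps)

lemma bil_lin: "bil (\<lambda>k. a * p k + b * u k) M q = a * bil p M q + b * bil u M q"
  unfolding bil_def
  by (simp add: algebra_simps sum.distrib sum_distrib_left)

lemma nash_tr: "nash R C p q = nash (tr C) (tr R) q p"
  unfolding nash_def by auto

lemma ws_tr: "ws_eq e R C p q = ws_eq e (tr C) (tr R) q p"
  unfolding ws_eq_def by auto

lemma pert_tr: "perturbation e R C R' C' = perturbation e (tr C) (tr R) (tr C') (tr R')"
  unfolding perturbation_def tr_def by auto

lemma dist_tr: "dist_prof p q ps qs = dist_prof q p qs ps"
  unfolding dist_prof_def by auto

lemma entries_tr: "entries01 M \<Longrightarrow> entries01 (tr M)"
  unfolding entries01_def tr_def by auto

lemma ws_stable_tr: "strong_ws_approx_stable e D R C \<Longrightarrow> strong_ws_approx_stable e D (tr C) (tr R)"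
proof -
  assume "strong_ws_approx_stable e D R C"
  then obtain ps qs where n: "nash R C ps qs" and h: "\<And>p q. ws_eq e R C p q \<Longrightarrow> dist_prof p q ps qs \<le> D"
    unfolding strong_ws_approx_stable_def by blast
  have "nash (tr C) (tr R) qs ps" using n nash_tr by blast
  moreover have "dist_prof p q qs ps \<le> D" if "ws_eq e (tr C) (tr R) p q" for p q
  proof -
    have "ws_eq e R C q p" using that ws_tr[of e R C q p] by simp
    thus ?thesis using h dist_tr by metis
  qed
  ultimately show ?thesis unfolding strong_ws_approx_stable_def by blast
qed

lemma pert_stable_tr: "strong_pert_stable e D R C \<Longrightarrow> strong_pert_stable e D (tr C) (tr R)"
proof -
  assume "strong_pert_stable e D R C"
  then obtain ps qs where n: "nash R C ps qs" and h: "\<And>R' C' p q. perturbation e R C R' C' \<Longrightarrow> nash R' C' p q \<Longrightarrow> dist_prof p q ps qs \<le> D"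
    unfolding strong_pert_stable_def by blast
  have "nash (tr C) (tr R) qs ps" using n nash_tr by blast
  moreover have "dist_prof p q qs ps \<le> D" if "perturbation e (tr C) (tr R) R' C'" "nash R' C' p q" for R' C' p q
  proof -
    have "perturbation e R C (tr C') (tr R')" using that(1) pert_tr[of e R C "tr C'" "tr R'"] by simp
    moreover have "nash (tr C') (tr R') q p" using that(2) nash_tr[of "tr C'" "tr R'" q p] by simp
    ultimately show ?thesis using h dist_tr by metis
  qed
  ultimately show ?thesis unfolding strong_pert_stable_def by blast
qed

lemma dist_tri: "dist_strat p p' \<le> dist_strat p ps + dist_strat p' ps"
proof -
  have "(\<Sum>i\<in>UNIV. \<bar>p i - p' i\<bar>) \<le> (\<Sum>i\<in>UNIV. \<bar>p i - ps i\<bar> + \<bar>p' i - ps i\<bar>)"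
    by (rule sum_mono) linarith
  thus ?thesis unfolding dist_strat_def by (simp add: sum.distrib)
qed

lemma nash_row_eq:
  assumes "nash R C p q" "p k > 0"
  shows "bil (unitv k) R q = bil p R q"
proof -
  have pv: "prob_vec p" and le: "\<And>i. bil (unitv i) R q \<le> bil p R q"
    using assms(1) unfolding nash_def by auto
  have "(\<Sum>i\<in>UNIV. p i * (bil p R q - bil (unitv i) R q)) = 
        bil p R q * (\<Sum>i\<in>UNIV. p i) - (\<Sum>i\<in>UNIV. p i * bil (unitv i) R q)"
    by (simp add: algebra_simps sum_subtractf sum_distrib_left sum_distrib_right)
  also have "\<dots> = 0" using pv bil_rows[of p R q] unfolding prob_vec_def by simp
  finally have "(\<Sum>i\<in>UNIV. p i * (bil p R q - bil (unitv i) R q)) = 0" .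
  moreover have "\<forall>i\<in>UNIV. 0 \<le> p i * (bil p R q - bil (unitv i) R q)"
    using pv le unfolding prob_vec_def by simp
  ultimately have "\<forall>x\<in>UNIV. p x * (bil p R q - bil (unitv x) R q) = 0"
    using sum_nonneg_eq_0_iff[of UNIV "\<lambda>i. p i * (bil p R q - bil (unitv i) R q)"] by simp
  hence "p k * (bil p R q - bil (unitv k) R q) = 0" by simp
  thus ?thesis using assms(2) by simp
qed

lemma nash_ws: assumes "nash R C p q" "0 \<le> e" shows "ws_eq e R C p q"
proof -
  have a: "bil (unitv j) R q - e \<le> bil (unitv k) R q" if "k \<in> supp p" for k j
  proof -
    have "bil (unitv k) R q = bil p R q" using nash_row_eq[OF assms(1)] that unfolding supp_def by auto
    moreover have "bil (unitv j) R q \<le> bil p R q" using assms(1) unfolding nash_def by auto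
    ultimately show ?thesis using assms(2) by linarith
  qed
  have b: "bil p C (unitv j) - e \<le> bil p C (unitv k)" if "k \<in> supp q" for k j
  proof -
    have "bil (unitv k) (tr C) p = bil q (tr C) p" using nash_row_eq[OF assms(1)[THEN nash_tr[THEN iffD1]]] that unfolding supp_def by auto
    moreover have "bil p C (unitv j) \<le> bil p C q" using assms(1) unfolding nash_def by auto
    ultimately show ?thesis using assms(2) by (simp add: supp_def)
  qed
  show ?thesis using a b assms unfolding ws_eq_def nash_def by auto
qed


lemma sum_split_at: "(\<Sum>k\<in>UNIV. f k) = f i + (\<Sum>k\<in>UNIV-{i}. f k)" for f :: "'n::finite \<Rightarrow> real"
  by (simp add: sum.remove)

lemma mixed_row:
  fixes R C :: "'n::finite \<Rightarrow> 'n \<Rightarrow> real"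
  assumes C01: "entries01 C" and e0: "0 < \<epsilon>" and e1: "\<epsilon> \<le> 1" and N: "nash R C p q"
    and ne: "i1 \<noteq> i2" and p1: "p i1 > 0" and p2: "p i2 > 0"
  shows "(strong_ws_approx_stable \<epsilon> \<Delta> R C \<longrightarrow> \<Delta> \<ge> \<epsilon>/4) \<and> (strong_pert_stable \<epsilon> \<Delta> R C \<longrightarrow> \<Delta> \<ge> \<epsilon>/8)"
proof -
  have pv: "prob_vec p" and qv: "prob_vec q" using N unfolding nash_def by auto
  have pnn: "\<And>k. 0 \<le> p k" and ps1: "(\<Sum>k\<in>UNIV. p k) = 1" using pv unfolding prob_vec_def by auto
  have "(\<Sum>k\<in>{i1,i2}. p k) \<le> (\<Sum>k\<in>UNIV. p k)" by (rule sum_mono2) (auto simp: pnn)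
  hence s12: "p i1 + p i2 \<le> 1" using ne ps1 by simp
  obtain i where pi: "0 < p i" "p i \<le> 1/2"
  proof (cases "p i1 \<le> 1/2")
    case True thus ?thesis using that p1 by blast
  next
    case False thus ?thesis using that[of i2] p2 s12 by linarith
  qed
  define a where "a = 1 - p i"
  have a: "1/2 \<le> a" "a < 1" using pi by (auto simp: a_def)
  define l where "l = \<epsilon> / (2*a)"
  have l0: "0 < l" using a e0 by (simp add: l_def)
  have la: "l * a = \<epsilon>/2" using a by (simp add: l_def)
  have l1: "l \<le> 1"
  proof -
    have "\<epsilon> \<le> 2*a" using a e1 by linarith
    thus ?thesis using a by (simp add: l_def field_simps)
  qed
  define p' where "p' = (\<lambda>k. (1-l)*p k + l * unitv i k)"
  have rest: "(\<Sum>k\<in>UNIV-{i}. p k) = a" using ps1 sum_split_at[of p i] by (simp add: a_def)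
  have p'v: "prob_vec p'"
  proof -
    have "\<forall>k. 0 \<le> p' k" using l0 l1 pnn by (auto simp: p'_def unitv_def)
    moreover have "(\<Sum>k\<in>UNIV. unitv i k) = 1" by (simp add: unitv_def)
    hence "(\<Sum>k\<in>UNIV. p' k) = 1" using ps1 by (simp add: p'_def sum.distrib sum_distrib_left[symmetric])
    ultimately show ?thesis unfolding prob_vec_def by blast
  qed
  have dist: "dist_strat p p' = \<epsilon>/2"
  proof -
    have "\<And>k. \<bar>p k - p' k\<bar> = l * \<bar>p k - unitv i k\<bar>"
    proof -
      fix k have "p k - p' k = l * (p k - unitv i k)" by (simp add: p'_def algebra_simps)
      thus "\<bar>p k - p' k\<bar> = l * \<bar>p k - unitv i k\<bar>" using l0 by (simp add: abs_mult)
    qed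
    hence "(\<Sum>k\<in>UNIV. \<bar>p k - p' k\<bar>) = l * (\<Sum>k\<in>UNIV. \<bar>p k - unitv i k\<bar>)"
      by (simp add: sum_distrib_left)
    also have "(\<Sum>k\<in>UNIV. \<bar>p k - unitv i k\<bar>) = \<bar>p i - 1\<bar> + (\<Sum>k\<in>UNIV-{i}. \<bar>p k - unitv i k\<bar>)"
      using sum_split_at[of "\<lambda>k. \<bar>p k - unitv i k\<bar>" i] by (simp add: unitv_def)
    also have "(\<Sum>k\<in>UNIV-{i}. \<bar>p k - unitv i k\<bar>) = (\<Sum>k\<in>UNIV-{i}. p k)"
      by (rule sum.cong) (auto simp: unitv_def pnn)
    also have "\<bar>p i - 1\<bar> = a" using a by (simp add: a_def)
    finally show ?thesis using rest la unfolding dist_strat_def by simp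
  qed
  have supp': "p k > 0" if "p' k > 0" for k
  proof (cases "k = i")
    case True thus ?thesis using pi by simp
  next
    case False
    hence "p' k = (1-l) * p k" by (simp add: p'_def unitv_def)
    thus ?thesis using that pnn[of k] by (metis less_eq_real_def mult_zero_right)
  qed
  have lin: "\<And>M v. bil p' M v = (1-l)*bil p M v + l * bil (unitv i) M v"
    unfolding p'_def by (rule bil_lin)
  have rowbest: "\<And>k. p k > 0 \<Longrightarrow> bil (unitv k) R q = bil p R q" using nash_row_eq[OF N] by blast
  have colbest: "\<And>k. q k > 0 \<Longrightarrow> bil p C (unitv k) = bil p C q"
    using nash_row_eq[OF N[THEN nash_tr[THEN iffD1]]] by simp
  have colle: "\<And>j. bil p C (unitv j) \<le> bil p C q" and rowle: "\<And>j. bil (unitv j) R q \<le> bil p R q"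
    using N unfolding nash_def by auto
  have colbound: "\<bar>bil p' C (unitv j) - bil p C (unitv j)\<bar> \<le> \<epsilon>/2" for j
  proof -
    have d: "bil p' C (unitv j) - bil p C (unitv j) = l * (bil (unitv i) C (unitv j) - bil p C (unitv j))"
      using lin by (simp add: algebra_simps)
    have cij: "bil (unitv i) C (unitv j) = C i j" by (simp add: bil_unit_right unit_l)
    define S where "S = (\<Sum>k\<in>UNIV-{i}. p k * C k j)"
    have pc: "bil p C (unitv j) = p i * C i j + S"
      unfolding bil_unit_right S_def by (rule sum_split_at)
    have S0: "0 \<le> S" unfolding S_def using C01 pnn by (auto simp: entries01_def intro!: sum_nonneg)
    have "S \<le> (\<Sum>k\<in>UNIV-{i}. p k)" unfolding S_def
      using C01 pnn by (auto simp: entries01_def intro!: sum_mono mult_left_le)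
    hence Sa: "S \<le> a" using rest by simp
    have c: "0 \<le> C i j" "C i j \<le> 1" using C01 by (auto simp: entries01_def)
    have "C i j - (p i * C i j + S) = a * C i j - S" by (simp add: a_def algebra_simps)
    moreover have "\<bar>a * C i j - S\<bar> \<le> a"
    proof -
      have "a * C i j \<le> a" using c a by (simp add: mult_left_le)
      moreover have "0 \<le> a * C i j" using c a by simp
      ultimately show ?thesis using S0 Sa by linarith
    qed
    ultimately have "\<bar>bil (unitv i) C (unitv j) - bil p C (unitv j)\<bar> \<le> a" using cij pc by simp
    hence "l * \<bar>bil (unitv i) C (unitv j) - bil p C (unitv j)\<bar> \<le> l * a" using l0 by simp
    thus ?thesis using d la l0 by (simp add: abs_mult)
  qed
  have rowp': "bil p' R q = bil p R q" using lin[of R q] rowbest[OF pi(1)] by (simp add: algebra_simps)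
  show ?thesis
  proof (intro conjI impI)
    assume "strong_ws_approx_stable \<epsilon> \<Delta> R C"
    then obtain ps qs where h: "\<And>p q. ws_eq \<epsilon> R C p q \<Longrightarrow> dist_prof p q ps qs \<le> \<Delta>"
      unfolding strong_ws_approx_stable_def by blast
    have w1: "ws_eq \<epsilon> R C p q" using nash_ws[OF N] e0 by simp
    have w2: "ws_eq \<epsilon> R C p' q"
      unfolding ws_eq_def
    proof (intro conjI ballI allI)
      show "prob_vec p'" "prob_vec q" by (fact p'v) (fact qv)
    next
      fix k j assume "k \<in> supp p'"
      hence "p k > 0" using supp' unfolding supp_def by auto
      thus "bil (unitv j) R q - \<epsilon> \<le> bil (unitv k) R q" using rowbest rowle[of j] e0 by fastforce
    next
      fix k j assume "k \<in> supp q"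
      hence "bil p C (unitv k) = bil p C q" using colbest unfolding supp_def by auto
      thus "bil p' C (unitv j) - \<epsilon> \<le> bil p' C (unitv k)"
        using colbound[of j] colbound[of k] colle[of j] by linarith
    qed
    have "dist_strat p ps \<le> \<Delta>" "dist_strat p' ps \<le> \<Delta>"
      using h[OF w1] h[OF w2] unfolding dist_prof_def by auto
    thus "\<Delta> \<ge> \<epsilon>/4" using dist_tri[of p p' ps] dist by linarith
  next
    assume "strong_pert_stable \<epsilon> \<Delta> R C"
    then obtain ps qs where h: "\<And>R' C' p q. perturbation \<epsilon> R C R' C' \<Longrightarrow> nash R' C' p q \<Longrightarrow> dist_prof p q ps qs \<le> \<Delta>"
      unfolding strong_pert_stable_def by blast
    define C' where "C' = (\<lambda>k j. C k j - (bil p' C (unitv j) - bil p C (unitv j)))"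
    have pt0: "perturbation \<epsilon> R C R C" using e0 by (simp add: perturbation_def)
    have pt1: "perturbation \<epsilon> R C R C'"
      unfolding perturbation_def C'_def
    proof (intro allI conjI)
      fix k j show "\<bar>R k j - R k j\<bar> \<le> \<epsilon>" using e0 by simp
      show "\<bar>C k j - (C k j - (bil p' C (unitv j) - bil p C (unitv j)))\<bar> \<le> \<epsilon>"
        using colbound[of j] e0 by simp
    qed
    have c'u: "bil p' C' (unitv j) = bil p C (unitv j)" for j
    proof -
      have "bil p' C' (unitv j) = (\<Sum>k\<in>UNIV. p' k * C k j) - (\<Sum>k\<in>UNIV. p' k) * (bil p' C (unitv j) - bil p C (unitv j))"
        unfolding bil_unit_right C'_def by (simp add: algebra_simps sum_subtractf sum_distrib_right sum.distrib)
      also have "\<dots> = bil p C (unitv j)" using p'v unfolding prob_vec_def by (simp add: bil_unit_right)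
      finally show ?thesis .
    qed
    have c'q: "bil p' C' q = bil p C q"
      using bil_cols[of p' C' q] bil_cols[of p C q] c'u by simp
    have n2: "nash R C' p' q"
      unfolding nash_def using p'v qv rowp' rowle colle c'u c'q by auto
    have "dist_strat p ps \<le> \<Delta>" "dist_strat p' ps \<le> \<Delta>"
      using h[OF pt0 N] h[OF pt1 n2] unfolding dist_prof_def by auto
    thus "\<Delta> \<ge> \<epsilon>/8" using dist_tri[of p p' ps] dist e0 by linarith
  qed
qed


lemma pure_of:
  fixes p :: "'n::finite \<Rightarrow> real"
  assumes pv: "prob_vec p" and nm: "\<not> (\<exists>i1 i2. i1 \<noteq> i2 \<and> p i1 > 0 \<and> p i2 > 0)"
  shows "\<exists>i. p = unitv i"
proof -
  have pnn: "\<And>k. 0 \<le> p k" and ps1: "(\<Sum>k\<in>UNIV. p k) = 1" using pv unfolding prob_vec_def by auto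
  obtain i where pi: "p i > 0"
  proof (rule ccontr)
    assume "\<not> thesis"
    hence "\<And>k. p k = 0" using that pnn by (metis less_eq_real_def)
    thus False using ps1 by simp
  qed
  have z: "\<And>k. k \<noteq> i \<Longrightarrow> p k = 0" using nm pi pnn by (metis less_eq_real_def)
  have "(\<Sum>k\<in>UNIV-{i}. p k) = 0" using z by simp
  hence "p i = 1" using ps1 sum_split_at[of p i] by simp
  hence "p = unitv i" using z by (auto simp: unitv_def)
  thus ?thesis by blast
qed

theorem lemma6:
  fixes R C :: "'n::finite \<Rightarrow> 'n \<Rightarrow> real" and \<epsilon> \<Delta> :: real
  assumes "entries01 R" and "entries01 C"
    and "0 < \<epsilon>" and "\<epsilon> \<le> 1"
    and "\<exists>p q. nash R C p q \<and> \<not> pure_pair p q"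
  shows "(strong_ws_approx_stable \<epsilon> \<Delta> R C \<longrightarrow> \<Delta> \<ge> \<epsilon> / 4) \<and>
         (strong_pert_stable \<epsilon> \<Delta> R C \<longrightarrow> \<Delta> \<ge> \<epsilon> / 8)"
proof -
  obtain p q where N: "nash R C p q" and np: "\<not> pure_pair p q" using assms(5) by blast
  have pv: "prob_vec p" and qv: "prob_vec q" using N unfolding nash_def by auto
  show ?thesis
  proof (cases "\<exists>i1 i2. i1 \<noteq> i2 \<and> p i1 > 0 \<and> p i2 > 0")
    case True
    then obtain i1 i2 where "i1 \<noteq> i2" "p i1 > 0" "p i2 > 0" by blast
    thus ?thesis using mixed_row[OF assms(2-4) N] by blast
  next
    case False
    then obtain i where pi: "p = unitv i" using pure_of[OF pv] by blast
    show ?thesis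
    proof (cases "\<exists>i1 i2. i1 \<noteq> i2 \<and> q i1 > 0 \<and> q i2 > 0")
      case True
      then obtain i1 i2 where ii: "i1 \<noteq> i2" "q i1 > 0" "q i2 > 0" by blast
      have N': "nash (tr C) (tr R) q p" using N nash_tr by blast
      have m: "(strong_ws_approx_stable \<epsilon> \<Delta> (tr C) (tr R) \<longrightarrow> \<Delta> \<ge> \<epsilon>/4) \<and>
               (strong_pert_stable \<epsilon> \<Delta> (tr C) (tr R) \<longrightarrow> \<Delta> \<ge> \<epsilon>/8)"
        using mixed_row[OF entries_tr[OF assms(1)] assms(3,4) N' ii] .
      show ?thesis using m ws_stable_tr pert_stable_tr by blast
    next
      case False
      then obtain j where "q = unitv j" using pure_of[OF qv] by blast
      hence "pure_pair p q" using pi unfolding pure_pair_def by blast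
      thus ?thesis using np by blast
    qed
  qed
qed

end
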